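(* Let $a\ge b\ge1$ be integers with either $b\ge2$, or $b=1$ and $a\ge5$, and $A=\begin{pmatrix}2&-a\\-b&2\end{pmatrix}$. For $i=1,2$: (1) if $b\ge2$, then $\beta_i^j-\beta_i^k$ is an imaginary root for all $j\ne k$, and $\beta_1^j-\beta_2^k$ is never a root for any $j,k\in\mathbb Z_+$; (2) if $b=1$ and $a\ge5$, then $\beta_i^j-\beta_i^k$ is an imaginary root when $|j-k|>1$, and $\beta_i^j-\beta_i^{j+1}$ is a real root; moreover $\beta_1^j-\beta_2^k$ is a root if and only if it is a real root if and only if $j=1$ and $k=0$. In particular, $\beta_i^j-\beta_i^k$ is always a root for $j\ne k$, $i=1,2$.
   Context: Let $\mathfrak g(A)$ be the Kac–Moody algebra of $A$, with simple roots $\alpha_1,\alpha_2$ and root system $\Delta$; a root $\alpha$ is real if $(\alpha,\alpha)>0$ and imaginary if $(\alpha,\alpha)\le0$, for the invariant form with $(\alpha_1,\alpha_1)=2$, $(\alpha_2,\alpha_2)=2a/b$, $(\alpha_1,\alpha_2)=-a$. $\mathbb Z_+=\{0,1,2,\dots\}$. Define $c_0=d_0=0$, $c_1=d_1=1$, $c_{k+2}+c_k=a d_{k+1}$, $d_{k+2}+d_k=b c_{k+1}$, and $\beta_1^j=c_j\alpha_1+d_{j+1}\alpha_2$, $\beta_2^j=c_{j+1}\alpha_1+d_j\alpha_2$ ($j\in\mathbb Z_+$); these are exactly the positive real roots. *)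

theory Defs
  imports Complex_Main
begin

text \<open>Roots of the rank-2 Kac--Moody algebra g(A), A = [[2,-a],[-b,2]], are encoded as
  integer coordinate pairs (m,n) meaning m*alpha1 + n*alpha2.
  The root system is given by Kac's description (Kac, Infinite-dimensional Lie algebras,
  Prop. 5.1 and Thm. 5.4): real roots = W-orbit of the simple roots;
  positive imaginary roots = W-orbit of the fundamental set K; imaginary roots = those and
  their negatives.\<close>

definition refl1 :: "int \<Rightarrow> int \<Rightarrow> int \<times> int \<Rightarrow> int \<times> int" where
  "refl1 a b v = (- fst v + a * snd v, snd v)"

definition refl2 :: "int \<Rightarrow> int \<Rightarrow> int \<times> int \<Rightarrow> int \<times> int" where
  "refl2 a b v = (fst v, b * fst v - snd v)"

inductive_set weyl_orbit :: "int \<Rightarrow> int \<Rightarrow> (int \<times> int) set \<Rightarrow> (int \<times> int) set"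
  for a b :: int and S :: "(int \<times> int) set" where
  base: "v \<in> S \<Longrightarrow> v \<in> weyl_orbit a b S"
| s1: "v \<in> weyl_orbit a b S \<Longrightarrow> refl1 a b v \<in> weyl_orbit a b S"
| s2: "v \<in> weyl_orbit a b S \<Longrightarrow> refl2 a b v \<in> weyl_orbit a b S"

text \<open>Kac's fundamental set K: nonzero elements of Q_+ with connected support and
  <alpha, alpha_i^vee> <= 0 for i = 1,2.\<close>
definition fund_set :: "int \<Rightarrow> int \<Rightarrow> (int \<times> int) set" where
  "fund_set a b = {(m, n). m \<ge> 0 \<and> n \<ge> 0 \<and> (m, n) \<noteq> (0, 0)
      \<and> (m = 0 \<or> n = 0 \<or> a \<noteq> 0)
      \<and> 2 * m - a * n \<le> 0 \<and> 2 * n - b * m \<le> 0}"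

definition root_system :: "int \<Rightarrow> int \<Rightarrow> (int \<times> int) set" where
  "root_system a b =
     weyl_orbit a b {(1, 0), (0, 1)} \<union> weyl_orbit a b (fund_set a b)
     \<union> {v. (- fst v, - snd v) \<in> weyl_orbit a b (fund_set a b)}"

text \<open>Invariant form: (a1,a1)=2, (a2,a2)=2a/b, (a1,a2)=-a.\<close>
definition inv_form :: "int \<Rightarrow> int \<Rightarrow> int \<times> int \<Rightarrow> real" where
  "inv_form a b v = 2 * (of_int (fst v))^2 + 2 * of_int a / of_int b * (of_int (snd v))^2
      - 2 * of_int a * of_int (fst v) * of_int (snd v)"

definition is_root :: "int \<Rightarrow> int \<Rightarrow> int \<times> int \<Rightarrow> bool" where
  "is_root a b v \<longleftrightarrow> v \<in> root_system a b"

definition real_root :: "int \<Rightarrow> int \<Rightarrow> int \<times> int \<Rightarrow> bool" where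
  "real_root a b v \<longleftrightarrow> is_root a b v \<and> inv_form a b v > 0"

definition imag_root :: "int \<Rightarrow> int \<Rightarrow> int \<times> int \<Rightarrow> bool" where
  "imag_root a b v \<longleftrightarrow> is_root a b v \<and> inv_form a b v \<le> 0"

fun cd :: "int \<Rightarrow> int \<Rightarrow> nat \<Rightarrow> int \<times> int" where
  "cd a b 0 = (0, 0)"
| "cd a b (Suc 0) = (1, 1)"
| "cd a b (Suc (Suc k)) =
     (a * snd (cd a b (Suc k)) - fst (cd a b k), b * fst (cd a b (Suc k)) - snd (cd a b k))"

definition cseq :: "int \<Rightarrow> int \<Rightarrow> nat \<Rightarrow> int" where "cseq a b k = fst (cd a b k)"
definition dseq :: "int \<Rightarrow> int \<Rightarrow> nat \<Rightarrow> int" where "dseq a b k = snd (cd a b k)"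

definition beta :: "int \<Rightarrow> int \<Rightarrow> nat \<Rightarrow> nat \<Rightarrow> int \<times> int" where
  "beta a b i j = (if i = 1 then (cseq a b j, dseq a b (j + 1)) else (cseq a b (j + 1), dseq a b j))"

definition vdiff :: "int \<times> int \<Rightarrow> int \<times> int \<Rightarrow> int \<times> int" where
  "vdiff u v = (fst u - fst v, snd u - snd v)"

end

theory Submission
  imports Defs
begin

fun ee :: "int \<Rightarrow> int \<Rightarrow> nat \<Rightarrow> int" where
  "ee a b 0 = 0"
| "ee a b (Suc 0) = 1"
| "ee a b (Suc (Suc n)) = (a*b-2) * ee a b (Suc n) - ee a b n"

lemma cd_closed:
  "cd a b (2*t) = (a * ee a b t, b * ee a b t) \<and>
   cd a b (Suc (2*t)) = (ee a b t + ee a b (Suc t), ee a b t + ee a b (Suc t))"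
proof (induction t)
  case 0
  then show ?case by simp
next
  case (Suc t)
  have h1: "cd a b (2 * Suc t) = (a * ee a b (Suc t), b * ee a b (Suc t))"
    using Suc.IH by (simp add: algebra_simps)
  have h2: "cd a b (Suc (2 * Suc t)) = (ee a b (Suc t) + ee a b (Suc (Suc t)), ee a b (Suc t) + ee a b (Suc (Suc t)))"
    using Suc.IH h1 by (simp add: algebra_simps)
  show ?case using h1 h2 by simp
qed

abbreviation "E a b \<equiv> ee a b"

lemma cd2: "cd a b (2*t) = (a * ee a b t, b * ee a b t)" using cd_closed by blast
lemma cd3: "cd a b (Suc (2*t)) = (ee a b t + ee a b (Suc t), ee a b t + ee a b (Suc t))" using cd_closed by blast

lemma beta_1e: "beta a b 1 (2*s) = (a * ee a b s, ee a b s + ee a b (Suc s))"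
  by (simp add: beta_def cseq_def dseq_def cd2 cd3)
lemma beta_1o: "beta a b 1 (Suc (2*s)) = (ee a b s + ee a b (Suc s), b * ee a b (Suc s))"
proof -
  have "Suc (Suc (2*s)) = 2 * Suc s" by simp
  then show ?thesis by (simp add: beta_def cseq_def dseq_def cd3 cd2 del: mult_Suc_right)
qed
lemma beta_2e: "beta a b 2 (2*s) = (ee a b s + ee a b (Suc s), b * ee a b s)"
  by (simp add: beta_def cseq_def dseq_def cd2 cd3)
lemma beta_2o: "beta a b 2 (Suc (2*s)) = (a * ee a b (Suc s), ee a b s + ee a b (Suc s))"
proof -
  have "Suc (Suc (2*s)) = 2 * Suc s" by simp
  then show ?thesis by (simp add: beta_def cseq_def dseq_def cd3 cd2 del: mult_Suc_right)
qed

definition Qf :: "int \<Rightarrow> int \<Rightarrow> int \<times> int \<Rightarrow> int" where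
  "Qf a b v = b * (fst v)^2 + a * (snd v)^2 - a * b * fst v * snd v"

definition "Kf a b s = (ee a b s)^2 + (ee a b (Suc s))^2 - (a*b-2) * ee a b s * ee a b (Suc s)"
definition "Lf a b s t = 2*ee a b s*ee a b t + 2*ee a b (Suc s)*ee a b (Suc t)
   - (a*b-2)*(ee a b s*ee a b (Suc t) + ee a b (Suc s)*ee a b t)"
definition "Df a b s t = ee a b s*ee a b (Suc t) - ee a b (Suc s)*ee a b t"
definition "Lp a b s t = 2*ee a b s*ee a b (Suc t) + 2*ee a b (Suc s)*ee a b t
   - (a*b-2)*(ee a b s*ee a b t + ee a b (Suc s)*ee a b (Suc t))"
definition "Dp a b s t = ee a b s*ee a b t - ee a b (Suc s)*ee a b (Suc t)"

lemma Kf1: "Kf a b s = 1"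
proof (induction s)
  case 0 then show ?case by (simp add: Kf_def)
next
  case (Suc s)
  then show ?case unfolding Kf_def by (simp add: power2_eq_square algebra_simps)
qed

lemma Lf_shift: "Lf a b (Suc s) (Suc t) = Lf a b s t"
  unfolding Lf_def by (simp add: algebra_simps)
lemma Df_shift: "Df a b (Suc s) (Suc t) = Df a b s t"
  unfolding Df_def by (simp add: algebra_simps)
lemma Lp_shift: "Lp a b (Suc s) t = Lp a b s (Suc t)"
  unfolding Lp_def by (simp add: algebra_simps)
lemma Dp_shift: "Dp a b (Suc s) t = Dp a b s (Suc t)"
  unfolding Dp_def by (simp add: algebra_simps)

lemma Lf_red: "Lf a b s (s+p) = 2 * ee a b (Suc p) - (a*b-2) * ee a b p"
proof (induction s)
  case 0 then show ?case by (simp add: Lf_def)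
next
  case (Suc s) then show ?case by (simp add: Lf_shift)
qed
lemma Df_red: "Df a b s (s+p) = - ee a b p"
proof (induction s)
  case 0 then show ?case by (simp add: Df_def)
next
  case (Suc s) then show ?case by (simp add: Df_shift)
qed
lemma Lp_red: "Lp a b s t = 2 * ee a b (s+t) - (a*b-2) * ee a b (Suc (s+t))"
proof (induction t arbitrary: s)
  case 0 then show ?case by (simp add: Lp_def)
next
  case (Suc t) then show ?case by (metis Lp_shift add_Suc add_Suc_right)
qed
lemma Dp_red: "Dp a b s t = - ee a b (Suc (s+t))"
proof (induction t arbitrary: s)
  case 0 then show ?case by (simp add: Dp_def)
next
  case (Suc t) then show ?case by (metis Dp_shift add_Suc add_Suc_right)
qed
lemma Lf_sym: "Lf a b s t = Lf a b t s" unfolding Lf_def by (simp add: algebra_simps)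
lemma Df_sym: "Df a b s t = - Df a b t s" unfolding Df_def by (simp add: algebra_simps)

lemmas QS = vdiff_def Qf_def Kf_def Lf_def Df_def Lp_def Dp_def power2_eq_square algebra_simps

lemma Q1ee: "Qf a b (vdiff (beta a b 1 (2*s)) (beta a b 1 (2*t))) = a*Kf a b s + a*Kf a b t - a*Lf a b s t"
  unfolding beta_1e by (simp add: QS)
lemma Q1oo: "Qf a b (vdiff (beta a b 1 (Suc (2*s))) (beta a b 1 (Suc (2*t)))) = b*Kf a b s + b*Kf a b t - b*Lf a b s t"
  unfolding beta_1o by (simp add: QS)
lemma Q1eo: "2*Qf a b (vdiff (beta a b 1 (2*s)) (beta a b 1 (Suc (2*t)))) = 2*a*Kf a b s + 2*b*Kf a b t - a*b*(Lf a b s t + (4-a*b)*Df a b s t)"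
  unfolding beta_1e beta_1o by (simp add: QS)
lemma Q2ee: "Qf a b (vdiff (beta a b 2 (2*s)) (beta a b 2 (2*t))) = b*Kf a b s + b*Kf a b t - b*Lf a b s t"
  unfolding beta_2e by (simp add: QS)
lemma Q2oo: "Qf a b (vdiff (beta a b 2 (Suc (2*s))) (beta a b 2 (Suc (2*t)))) = a*Kf a b s + a*Kf a b t - a*Lf a b s t"
  unfolding beta_2o by (simp add: QS)
lemma Q2eo: "2*Qf a b (vdiff (beta a b 2 (2*s)) (beta a b 2 (Suc (2*t)))) = 2*b*Kf a b s + 2*a*Kf a b t - a*b*(Lf a b s t + (4-a*b)*Df a b s t)"
  unfolding beta_2e beta_2o by (simp add: QS)
lemma Qmee: "2*Qf a b (vdiff (beta a b 1 (2*s)) (beta a b 2 (2*t))) = 2*a*Kf a b s + 2*b*Kf a b t - a*b*(Lp a b s t + (4-a*b)*Dp a b s t)"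
  unfolding beta_1e beta_2e by (simp add: QS)
lemma Qmoo: "2*Qf a b (vdiff (beta a b 1 (Suc (2*s))) (beta a b 2 (Suc (2*t)))) = 2*b*Kf a b s + 2*a*Kf a b t - a*b*(Lp a b s t + (a*b-4)*Dp a b s t)"
  unfolding beta_1o beta_2o by (simp add: QS)
lemma Qmeo: "Qf a b (vdiff (beta a b 1 (2*s)) (beta a b 2 (Suc (2*t)))) = a*Kf a b s + a*Kf a b t - a*Lp a b s t"
  unfolding beta_1e beta_2o by (simp add: QS)
lemma Qmoe: "Qf a b (vdiff (beta a b 1 (Suc (2*s))) (beta a b 2 (2*t))) = b*Kf a b s + b*Kf a b t - b*Lp a b s t"
  unfolding beta_1o beta_2e by (simp add: QS)

lemma ee_basic: assumes "a*b \<ge> 4" shows "ee a b n \<ge> 0 \<and> ee a b (Suc n) \<ge> ee a b n + 1"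
proof (induction n)
  case 0 then show ?case by simp
next
  case (Suc n)
  have h: "(a*b-4) * ee a b (Suc n) \<ge> 0" using Suc assms by simp
  have "(a*b-2) * ee a b (Suc n) = (a*b-4) * ee a b (Suc n) + 2 * ee a b (Suc n)" by (simp add: algebra_simps)
  then show ?case using Suc h by simp
qed

lemma ee_nonneg: "a*b \<ge> 4 \<Longrightarrow> ee a b n \<ge> 0" using ee_basic by blast
lemma ee_inc: "a*b \<ge> 4 \<Longrightarrow> ee a b (Suc n) \<ge> ee a b n + 1" using ee_basic by blast

lemma ee_diff_step: assumes "a*b \<ge> 4"
  shows "ee a b (Suc n) - ee a b n \<le> ee a b (Suc (Suc n)) - ee a b (Suc n)"
proof -
  have h: "(a*b-4) * ee a b (Suc n) \<ge> 0" using ee_nonneg[OF assms] assms by simp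
  have "(a*b-2) * ee a b (Suc n) = (a*b-4) * ee a b (Suc n) + 2 * ee a b (Suc n)" by (simp add: algebra_simps)
  then show ?thesis using h by simp
qed

lemma ee_diff_mono: assumes "a*b \<ge> 4" and "m \<le> n"
  shows "ee a b (Suc m) - ee a b m \<le> ee a b (Suc n) - ee a b n"
  using assms(2)
proof (induction n rule: dec_induct)
  case base then show ?case by simp
next
  case (step n) then show ?case using ee_diff_step[OF assms(1), of n] by linarith
qed

lemma ee_mono2: assumes "a*b \<ge> 4" shows "ee a b n \<le> ee a b (Suc (Suc n))"
  using ee_inc[OF assms, of n] ee_inc[OF assms, of "Suc n"] by linarith

lemma Lf_ge: assumes "a*b \<ge> 4" and "s < t" shows "Lf a b s t \<ge> a*b - 2"
proof -
  define q where "q = t - s - 1"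
  have t: "t = s + Suc q" using assms(2) unfolding q_def by simp
  have L: "Lf a b s t = 2 * ee a b (Suc (Suc q)) - (a*b-2) * ee a b (Suc q)"
    using Lf_red[of a b s "Suc q"] t by simp
  have r: "ee a b (Suc (Suc q)) = (a*b-2) * ee a b (Suc q) - ee a b q" by simp
  have i1: "ee a b (Suc q) \<ge> 1" using ee_inc[OF assms(1), of q] ee_nonneg[OF assms(1), of q] by linarith
  have i2: "ee a b (Suc q) - ee a b q \<ge> 1" using ee_inc[OF assms(1), of q] by linarith
  have p: "(a*b-4) * (ee a b (Suc q) - 1) \<ge> 0" using i1 assms(1) by (intro mult_nonneg_nonneg) auto
  have "Lf a b s t = (a*b-4) * (ee a b (Suc q) - 1) + (a*b - 4) + 2 * (ee a b (Suc q) - ee a b q)"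
    unfolding L r by (simp add: algebra_simps del: ee.simps)
  moreover obtain P where P: "P = (a*b-4) * (ee a b (Suc q) - 1)" by blast
  ultimately have "Lf a b s t = P + (a*b-4) + 2 * (ee a b (Suc q) - ee a b q)" "P \<ge> 0" using p by auto
  then show ?thesis using i2 by (smt (verit))
qed

lemma eo_eval_le: assumes "s \<le> t"
  shows "Lf a b s t + (4-a*b) * Df a b s t = 2 * (ee a b (Suc (t-s)) - ee a b (t-s))"
proof -
  define p where "p = t - s"
  have t: "t = s + p" using assms unfolding p_def by simp
  show ?thesis unfolding t using Lf_red[of a b s p] Df_red[of a b s p] by (simp add: algebra_simps)
qed

lemma eo_eval_gt: assumes "t < s"
  shows "Lf a b s t + (4-a*b) * Df a b s t = 2 * (ee a b (s-t) - ee a b (s-t-1))"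
proof -
  define q where "q = s - t - 1"
  have s: "s = t + Suc q" using assms unfolding q_def by simp
  have "Lf a b s t = 2 * ee a b (Suc (Suc q)) - (a*b-2) * ee a b (Suc q)"
    using Lf_red[of a b t "Suc q"] s Lf_sym[of a b s t] by simp
  moreover have "Df a b s t = ee a b (Suc q)"
  proof -
    have "Df a b t s = - ee a b (Suc q)" using Df_red[of a b t "Suc q"] s by simp
    then show ?thesis using Df_sym[of a b s t] by linarith
  qed
  moreover have "s - t = Suc q" "s - t - 1 = q" using s by auto
  moreover have "ee a b (Suc (Suc q)) = (a*b-2) * ee a b (Suc q) - ee a b q" by simp
  ultimately show ?thesis by (simp only:) (simp add: algebra_simps del: ee.simps)
qed

lemma mix_ee: "Lp a b s t + (4-a*b) * Dp a b s t = 2 * ee a b (s+t) - 2 * ee a b (Suc (s+t))"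
  by (simp add: Lp_red Dp_red algebra_simps)
lemma mix_oo: "Lp a b s t + (a*b-4) * Dp a b s t = 2 * (ee a b (Suc (s+t)) - ee a b (Suc (Suc (s+t))))"
  by (simp add: Lp_red Dp_red algebra_simps)
lemma mix_eo: "Lp a b s t = ee a b (s+t) - ee a b (Suc (Suc (s+t)))"
  by (simp add: Lp_red algebra_simps)

lemma inv_Q: assumes "b > 0" shows "inv_form a b v = 2 * of_int (Qf a b v) / of_int b"
  using assms unfolding inv_form_def Qf_def by (simp add: field_simps power2_eq_square)

lemma inv_pos_iff: "b > 0 \<Longrightarrow> inv_form a b v > 0 \<longleftrightarrow> Qf a b v > 0"
  by (simp add: inv_Q zero_less_divide_iff zero_less_mult_iff)
lemma inv_nonpos_iff: "b > 0 \<Longrightarrow> inv_form a b v \<le> 0 \<longleftrightarrow> Qf a b v \<le> 0"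
  using inv_pos_iff[of b a v] by linarith

lemma Q_refl1: "Qf a b (refl1 a b v) = Qf a b v"
  unfolding Qf_def refl1_def by (simp add: power2_eq_square algebra_simps)
lemma Q_refl2: "Qf a b (refl2 a b v) = Qf a b v"
  unfolding Qf_def refl2_def by (simp add: power2_eq_square algebra_simps)
lemma Q_neg: "Qf a b (- fst v, - snd v) = Qf a b v"
  unfolding Qf_def by (simp add: power2_eq_square algebra_simps)

lemma orbit_Q: "v \<in> weyl_orbit a b S \<Longrightarrow> \<exists>w\<in>S. Qf a b v = Qf a b w"
  by (induction rule: weyl_orbit.induct) (auto simp: Q_refl1 Q_refl2)

lemma fund_Q: assumes "a \<ge> 0" "b \<ge> 0" "w \<in> fund_set a b" shows "Qf a b w \<le> 0"
proof -
  obtain m n where w: "w = (m, n)" by (cases w)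
  have h: "m \<ge> 0" "n \<ge> 0" "2*m - a*n \<le> 0" "2*n - b*m \<le> 0" using assms(3) unfolding w fund_set_def by auto
  have e: "2 * Qf a b w = (b*m) * (2*m - a*n) + (a*n) * (2*n - b*m)"
    unfolding w Qf_def by (simp add: power2_eq_square algebra_simps)
  have "(b*m) * (2*m - a*n) \<le> 0" using h assms by (intro mult_nonneg_nonpos) auto
  moreover have "(a*n) * (2*n - b*m) \<le> 0" using h assms by (intro mult_nonneg_nonpos) auto
  ultimately show ?thesis using e by linarith
qed

lemma root_Q: assumes "a \<ge> 0" "b \<ge> 0" "is_root a b v"
  shows "Qf a b v \<le> 0 \<or> Qf a b v = a \<or> Qf a b v = b"
proof -
  have "v \<in> weyl_orbit a b {(1, 0), (0, 1)} \<or> v \<in> weyl_orbit a b (fund_set a b)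
     \<or> (- fst v, - snd v) \<in> weyl_orbit a b (fund_set a b)"
    using assms(3) unfolding is_root_def root_system_def by auto
  then show ?thesis
  proof (elim disjE)
    assume "v \<in> weyl_orbit a b {(1, 0), (0, 1)}"
    then obtain w where "w \<in> {(1,0),(0,1)}" "Qf a b v = Qf a b w" using orbit_Q by blast
    then show ?thesis unfolding Qf_def by auto
  next
    assume "v \<in> weyl_orbit a b (fund_set a b)"
    then obtain w where "w \<in> fund_set a b" "Qf a b v = Qf a b w" using orbit_Q by blast
    then show ?thesis using fund_Q assms by auto
  next
    assume "(- fst v, - snd v) \<in> weyl_orbit a b (fund_set a b)"
    then obtain w where "w \<in> fund_set a b" "Qf a b (- fst v, - snd v) = Qf a b w" using orbit_Q by blast
    then show ?thesis using fund_Q assms Q_neg[of a b v] by auto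
  qed
qed

lemma neg_orbit: "v \<in> weyl_orbit a b {(1, 0), (0, 1)} \<Longrightarrow> (- fst v, - snd v) \<in> weyl_orbit a b {(1, 0), (0, 1)}"
proof (induction rule: weyl_orbit.induct)
  case (base v)
  then show ?case
  proof
    assume "v = (1,0)"
    then have "(- fst v, - snd v) = refl1 a b (1,0)" by (simp add: refl1_def)
    then show ?thesis by (metis insertI1 weyl_orbit.base weyl_orbit.s1)
  next
    assume "v \<in> {(0,1)}"
    then have "(- fst v, - snd v) = refl2 a b (0,1)" by (simp add: refl2_def)
    then show ?thesis by (metis insertI1 insertI2 weyl_orbit.base weyl_orbit.s2)
  qed
next
  case (s1 v)
  have "(- fst (refl1 a b v), - snd (refl1 a b v)) = refl1 a b (- fst v, - snd v)" by (simp add: refl1_def)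
  then show ?case using s1 weyl_orbit.s1 by metis
next
  case (s2 v)
  have "(- fst (refl2 a b v), - snd (refl2 a b v)) = refl2 a b (- fst v, - snd v)" by (simp add: refl2_def)
  then show ?case using s2 weyl_orbit.s2 by metis
qed

lemma prod_ge1: "(x::int) \<ge> 1 \<Longrightarrow> y \<ge> 1 \<Longrightarrow> x*y \<ge> 1"
  using mult_mono[of 1 x 1 y] by simp

lemma same_sign_aux: assumes "a \<ge> 1" "b \<ge> 1" "m \<ge> 1" "n \<le> -1"
  shows "Qf a b (m, n) > b"
proof -
  have e: "Qf a b (m,n) = b*(m*m) + a*(n*n) + (a*b)*(m*(-n))" unfolding Qf_def by (simp add: power2_eq_square algebra_simps)
  have "m*m \<ge> 1" using prod_ge1 assms by simp
  then have "b*(m*m) \<ge> b*1" using assms by (intro mult_left_mono) auto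
  moreover have "a*(n*n) \<ge> 0" using assms by simp
  moreover have "(a*b)*(m*(-n)) \<ge> 1" using prod_ge1[OF prod_ge1[OF assms(1,2)] prod_ge1[of m "-n"]] assms by simp
  ultimately show ?thesis using e by linarith
qed

lemma same_sign: assumes "a \<ge> 1" "b \<ge> 1" "Qf a b (m, n) \<le> b"
  shows "(m \<ge> 0 \<and> n \<ge> 0) \<or> (m \<le> 0 \<and> n \<le> 0)"
proof (rule ccontr)
  assume "\<not> ?thesis"
  then have "(m \<ge> 1 \<and> n \<le> -1) \<or> (-m \<ge> 1 \<and> -n \<le> -1)" by linarith
  then show False
  proof
    assume "m \<ge> 1 \<and> n \<le> -1"
    then show False using same_sign_aux[OF assms(1,2)] assms(3) by fastforce
  next
    assume "-m \<ge> 1 \<and> -n \<le> -1"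
    then have "Qf a b (-m, -n) > b" using same_sign_aux[OF assms(1,2)] by blast
    then show False using Q_neg[of a b "(m,n)"] assms(3) by simp
  qed
qed

lemma Qf_alt1: "Qf a b (m,n) = b*m*(m - a*n) + a*(n*n)"
  unfolding Qf_def by (simp add: power2_eq_square algebra_simps)
lemma Qf_alt2: "Qf a b (m,n) = a*n*(n - b*m) + b*(m*m)"
  unfolding Qf_def by (simp add: power2_eq_square algebra_simps)
lemma Qf_alt3: "2 * Qf a b (m,n) = (b*m) * (2*m - a*n) + (a*n) * (2*n - b*m)"
  unfolding Qf_def by (simp add: power2_eq_square algebra_simps)

lemma refl1_inv: "refl1 a b (a*n - m, n) = (m, n)" by (simp add: refl1_def)
lemma refl2_inv: "refl2 a b (m, b*m - n) = (m, n)" by (simp add: refl2_def)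
lemma refl1_eq: "refl1 a b (m, n) = (a*n - m, n)" by (simp add: refl1_def)
lemma refl2_eq: "refl2 a b (m, n) = (m, b*m - n)" by (simp add: refl2_def)

lemma prod3_ge1: "(x::int) \<ge> 1 \<Longrightarrow> y \<ge> 1 \<Longrightarrow> z \<ge> 1 \<Longrightarrow> x*y*z \<ge> 1"
  using prod_ge1 by (metis)

lemma pos_fund_aux:
  assumes a: "a \<ge> 1" and b: "b \<ge> 1"
  shows "\<forall>m n. nat (m+n) = N \<longrightarrow> m \<ge> 0 \<longrightarrow> n \<ge> 0 \<longrightarrow> (m,n) \<noteq> (0,0) \<longrightarrow> Qf a b (m,n) \<le> 0
     \<longrightarrow> (m,n) \<in> weyl_orbit a b (fund_set a b)"
proof (induction N rule: less_induct)
  case (less N)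
  show ?case
  proof (intro allI impI)
    fix m n assume N: "nat (m+n) = N" and m0: "m \<ge> 0" and n0: "n \<ge> 0" and nz: "(m,n) \<noteq> (0,0)"
      and Q: "Qf a b (m,n) \<le> 0"
    consider (A) "2*m - a*n \<le> 0 \<and> 2*n - b*m \<le> 0" | (B) "2*m - a*n > 0" | (C) "2*n - b*m > 0" by linarith
    then show "(m,n) \<in> weyl_orbit a b (fund_set a b)"
    proof cases
      case A
      then have "(m,n) \<in> fund_set a b" using m0 n0 nz a unfolding fund_set_def by auto
      then show ?thesis by (rule weyl_orbit.base)
    next
      case B
      have an: "a*n \<ge> 0" using a n0 by simp
      have m1: "a*n - m \<ge> 0"
      proof (rule ccontr)
        assume "\<not> ?thesis"
        then have "m - a*n \<ge> 1" "m \<ge> 1" using an by linarith+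
        then have "b*m*(m - a*n) \<ge> 1" using b prod3_ge1 by blast
        moreover have "a*(n*n) \<ge> 0" using a by simp
        ultimately show False using Q Qf_alt1[of a b m n] by linarith
      qed
      have lt: "nat (a*n - m + n) < N" using B N m1 n0 by linarith
      have nz': "(a*n - m, n) \<noteq> (0,0)" using nz by auto
      have Q': "Qf a b (a*n - m, n) \<le> 0" using Q Q_refl1[of a b "(m,n)"] by (simp add: refl1_eq)
      have "(a*n - m, n) \<in> weyl_orbit a b (fund_set a b)"
        using less.IH[OF lt] m1 n0 nz' Q' by blast
      then show ?thesis using weyl_orbit.s1 refl1_inv by metis
    next
      case C
      have bm: "b*m \<ge> 0" using b m0 by simp
      have n1: "b*m - n \<ge> 0"
      proof (rule ccontr)
        assume "\<not> ?thesis"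
        then have "n - b*m \<ge> 1" "n \<ge> 1" using bm by linarith+
        then have "a*n*(n - b*m) \<ge> 1" using a prod3_ge1 by blast
        moreover have "b*(m*m) \<ge> 0" using b by simp
        ultimately show False using Q Qf_alt2[of a b m n] by linarith
      qed
      have lt: "nat (m + (b*m - n)) < N" using C N n1 m0 by linarith
      have nz': "(m, b*m - n) \<noteq> (0,0)" using nz by auto
      have Q': "Qf a b (m, b*m - n) \<le> 0" using Q Q_refl2[of a b "(m,n)"] by (simp add: refl2_eq)
      have "(m, b*m - n) \<in> weyl_orbit a b (fund_set a b)"
        using less.IH[OF lt] n1 m0 nz' Q' by blast
      then show ?thesis using weyl_orbit.s2 refl2_inv by metis
    qed
  qed
qed

lemma imag_of_Q: assumes a: "a \<ge> 1" and b: "b \<ge> 1" and Q: "Qf a b v \<le> 0" and nz: "v \<noteq> (0,0)"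
  shows "imag_root a b v"
proof -
  obtain m n where v: "v = (m,n)" by (cases v)
  have ss: "(m \<ge> 0 \<and> n \<ge> 0) \<or> (m \<le> 0 \<and> n \<le> 0)" using same_sign[OF a b, of m n] Q v b by simp
  have "is_root a b v"
  proof (cases "m \<ge> 0 \<and> n \<ge> 0")
    case True
    then have "v \<in> weyl_orbit a b (fund_set a b)" using pos_fund_aux[OF a b] Q nz v by blast
    then show ?thesis unfolding is_root_def root_system_def by blast
  next
    case False
    then have "-m \<ge> 0" "-n \<ge> 0" using ss by auto
    moreover have "(-m, -n) \<noteq> (0,0)" using nz v by auto
    moreover have "Qf a b (-m,-n) \<le> 0" using Q v Q_neg[of a b "(m,n)"] by simp
    ultimately have "(-m,-n) \<in> weyl_orbit a b (fund_set a b)" using pos_fund_aux[OF a b] by blast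
    then show ?thesis unfolding is_root_def root_system_def v by simp
  qed
  moreover have "inv_form a b v \<le> 0" using inv_nonpos_iff[of b a v] b Q by simp
  ultimately show ?thesis unfolding imag_root_def by simp
qed

lemma sq_eq1: assumes "(m::int) \<ge> 0" "b \<ge> 1" "b*(m*m) = b" shows "m = 1"
proof -
  have "m*m = 1" using assms by simp
  then show ?thesis using assms(1) zmult_eq_1_iff[of m m] by auto
qed

lemma sq_le: assumes "(n::int) \<ge> 1" "a \<ge> 1" "a*(n*n) \<le> a" shows "n = 1"
proof (rule ccontr)
  assume "n \<noteq> 1"
  then have "n \<ge> 2" using assms by linarith
  then have "n*n \<ge> 2*2" using mult_mono[of 2 n 2 n] by simp
  then have "a*(n*n) \<ge> a*4" using assms(2) by (intro mult_left_mono) auto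
  then show False using assms by linarith
qed

lemma pos_simple_aux:
  assumes b: "b \<ge> 1" and ab: "b \<le> a"
  shows "\<forall>m n. nat (m+n) = N \<longrightarrow> m \<ge> 0 \<longrightarrow> n \<ge> 0 \<longrightarrow> Qf a b (m,n) = b
     \<longrightarrow> (m,n) \<in> weyl_orbit a b {(1,0),(0,1)}"
proof (induction N rule: less_induct)
  case (less N)
  have a: "a \<ge> 1" using b ab by simp
  show ?case
  proof (intro allI impI)
    fix m n assume N: "nat (m+n) = N" and m0: "m \<ge> 0" and n0: "n \<ge> 0" and Q: "Qf a b (m,n) = b"
    consider (A) "2*m - a*n \<le> 0 \<and> 2*n - b*m \<le> 0" | (B) "2*m - a*n > 0" | (C) "2*n - b*m > 0" by linarith
    then show "(m,n) \<in> weyl_orbit a b {(1,0),(0,1)}"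
    proof cases
      case A
      have "(b*m) * (2*m - a*n) \<le> 0" using A m0 b by (intro mult_nonneg_nonpos) auto
      moreover have "(a*n) * (2*n - b*m) \<le> 0" using A n0 a by (intro mult_nonneg_nonpos) auto
      ultimately have False using Qf_alt3[of a b m n] Q b by linarith
      then show ?thesis ..
    next
      case B
      show ?thesis
      proof (cases "n = 0")
        case True
        then have "b*(m*m) = b" using Q unfolding Qf_def by (simp add: power2_eq_square)
        then have "m = 1" using sq_eq1 m0 b by blast
        then show ?thesis using True by (simp add: weyl_orbit.base)
      next
        case False
        then have n1: "n \<ge> 1" using n0 by simp
        have an: "a*n \<ge> 0" using a n0 by simp
        have m1: "a*n - m \<ge> 0"
        proof (rule ccontr)
          assume "\<not> ?thesis"
          then have "m - a*n \<ge> 1" "m \<ge> 1" using an by linarith+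
          then have "m*(m - a*n) \<ge> 1" using prod_ge1 by blast
          then have "b*(m*(m - a*n)) \<ge> b*1" using b by (intro mult_left_mono) auto
          then have "b*m*(m - a*n) \<ge> b" by (simp add: mult.assoc)
          moreover have "a*(n*n) \<ge> 1" using a n1 prod3_ge1[of a n n] by (simp add: mult.assoc)
          ultimately show False using Q Qf_alt1[of a b m n] ab by linarith
        qed
        have lt: "nat (a*n - m + n) < N" using B N m1 n0 by linarith
        have Q': "Qf a b (a*n - m, n) = b" using Q Q_refl1[of a b "(m,n)"] by (simp add: refl1_eq)
        have "(a*n - m, n) \<in> weyl_orbit a b {(1,0),(0,1)}"
          using less.IH[OF lt] m1 n0 Q' by blast
        then show ?thesis using weyl_orbit.s1 refl1_inv by metis
      qed
    next
      case C
      show ?thesis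
      proof (cases "m = 0")
        case True
        then have e: "a*(n*n) = b" using Q unfolding Qf_def by (simp add: power2_eq_square)
        have "n \<ge> 1" using C True by simp
        then have "n = 1" using sq_le[of n a] e a ab by simp
        then show ?thesis using True by (simp add: weyl_orbit.base)
      next
        case False
        then have m1': "m \<ge> 1" using m0 by simp
        have bm: "b*m \<ge> 0" using b m0 by simp
        have n1: "b*m - n \<ge> 0"
        proof (rule ccontr)
          assume "\<not> ?thesis"
          then have "n - b*m \<ge> 1" "n \<ge> 1" using bm by linarith+
          then have "a*n*(n - b*m) \<ge> 1" using a prod3_ge1 by blast
          moreover have "b*(m*m) \<ge> b" using b m1' mult_left_mono[of 1 "m*m" b] prod_ge1[of m m] by simp
          ultimately show False using Q Qf_alt2[of a b m n] by linarith
        qed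
        have lt: "nat (m + (b*m - n)) < N" using C N n1 m0 by linarith
        have Q': "Qf a b (m, b*m - n) = b" using Q Q_refl2[of a b "(m,n)"] by (simp add: refl2_eq)
        have "(m, b*m - n) \<in> weyl_orbit a b {(1,0),(0,1)}"
          using less.IH[OF lt] n1 m0 Q' by blast
        then show ?thesis using weyl_orbit.s2 refl2_inv by metis
      qed
    qed
  qed
qed

lemma real_of_Q: assumes b: "b \<ge> 1" and ab: "b \<le> a" and Q: "Qf a b v = b"
  shows "real_root a b v"
proof -
  have a: "a \<ge> 1" using b ab by simp
  obtain m n where v: "v = (m,n)" by (cases v)
  have ss: "(m \<ge> 0 \<and> n \<ge> 0) \<or> (m \<le> 0 \<and> n \<le> 0)" using same_sign[OF a b, of m n] Q v by simp
  have "is_root a b v"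
  proof (cases "m \<ge> 0 \<and> n \<ge> 0")
    case True
    then have "v \<in> weyl_orbit a b {(1,0),(0,1)}" using pos_simple_aux[OF b ab] Q v by blast
    then show ?thesis unfolding is_root_def root_system_def by blast
  next
    case False
    then have "-m \<ge> 0" "-n \<ge> 0" using ss by auto
    moreover have "Qf a b (-m,-n) = b" using Q v Q_neg[of a b "(m,n)"] by simp
    ultimately have "(-m,-n) \<in> weyl_orbit a b {(1,0),(0,1)}" using pos_simple_aux[OF b ab] by blast
    then have "(- (-m), - (-n)) \<in> weyl_orbit a b {(1,0),(0,1)}" using neg_orbit by fastforce
    then show ?thesis unfolding is_root_def root_system_def v by simp
  qed
  moreover have "inv_form a b v > 0" using inv_pos_iff[of b a v] b Q by simp
  ultimately show ?thesis unfolding real_root_def by simp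
qed

lemma vdiff_swap: "Qf a b (vdiff u v) = Qf a b (vdiff v u)"
  using Q_neg[of a b "vdiff u v"] by (simp add: vdiff_def)

lemma same_helper: assumes "(c::int) \<ge> 1" "L \<ge> a*b - 2" "a*b \<ge> 4"
  shows "c*1 + c*1 - c*L \<le> 4 - a*b"
proof -
  have "(c-1)*(2-L) \<le> 0" using assms by (intro mult_nonneg_nonpos) auto
  moreover have "c*1 + c*1 - c*L = (c-1)*(2-L) + (2 - L)" by (simp add: algebra_simps)
  ultimately show ?thesis using assms by linarith
qed

lemma same_par_lt: assumes ab: "a*b \<ge> 4" and a: "a \<ge> 1" and b: "b \<ge> 1" and i: "i \<in> {1,2::nat}" and p: "p \<in> {0,1::nat}" and st: "s < t"
  shows "Qf a b (vdiff (beta a b i (2*s+p)) (beta a b i (2*t+p))) \<le> 4 - a*b"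
proof -
  have L: "Lf a b s t \<ge> a*b - 2" using Lf_ge[OF ab st] .
  consider "i = 1" "p = 0" | "i = 1" "p = 1" | "i = 2" "p = 0" | "i = 2" "p = 1" using i p by auto
  then show ?thesis
  proof cases
    case 1 then show ?thesis using Q1ee[of a b s t] Kf1 same_helper[OF a L ab] by simp
  next
    case 2 then show ?thesis using Q1oo[of a b s t] Kf1 same_helper[OF b L ab] by simp
  next
    case 3 then show ?thesis using Q2ee[of a b s t] Kf1 same_helper[OF b L ab] by simp
  next
    case 4 then show ?thesis using Q2oo[of a b s t] Kf1 same_helper[OF a L ab] by simp
  qed
qed

lemma same_par: assumes ab: "a*b \<ge> 4" and a: "a \<ge> 1" and b: "b \<ge> 1" and i: "i \<in> {1,2::nat}" and p: "p \<in> {0,1::nat}" and st: "s \<noteq> t"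
  shows "Qf a b (vdiff (beta a b i (2*s+p)) (beta a b i (2*t+p))) \<le> 4 - a*b"
proof (cases "s < t")
  case True then show ?thesis using same_par_lt[OF ab a b i p] by blast
next
  case False
  then have "t < s" using st by simp
  then show ?thesis using same_par_lt[OF ab a b i p] vdiff_swap by metis
qed

lemma half_helper: assumes "2*(q::int) = 2*a + 2*b - a*b*(2*x - 2*y)" shows "q = a + b - a*b*(x - y)"
proof -
  have "a*b*(2*x - 2*y) = 2*(a*b*(x-y))" by (simp add: algebra_simps)
  then show ?thesis using assms by linarith
qed

lemma odd_par: assumes i: "i \<in> {1,2::nat}"
  shows "\<exists>r. \<bar>int (2*s) - int (Suc (2*t))\<bar> = 2 * int r + 1 \<and>
    Qf a b (vdiff (beta a b i (2*s)) (beta a b i (Suc (2*t)))) = a + b - a*b*(ee a b (Suc r) - ee a b r)"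
proof -
  have two: "2 * Qf a b (vdiff (beta a b i (2*s)) (beta a b i (Suc (2*t)))) = 2*a + 2*b - a*b*(Lf a b s t + (4-a*b)*Df a b s t)"
    using i Q1eo[of a b s t] Q2eo[of a b s t] Kf1 by auto
  show ?thesis
  proof (cases "s \<le> t")
    case True
    have "\<bar>int (2*s) - int (Suc (2*t))\<bar> = 2 * int (t - s) + 1" using True by simp
    moreover have "Qf a b (vdiff (beta a b i (2*s)) (beta a b i (Suc (2*t)))) = a + b - a*b*(ee a b (Suc (t-s)) - ee a b (t-s))"
      using two eo_eval_le[OF True, of a b] half_helper by simp
    ultimately show ?thesis by blast
  next
    case False
    then have ts: "t < s" by simp
    have "\<bar>int (2*s) - int (Suc (2*t))\<bar> = 2 * int (s - t - 1) + 1" using ts by simp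
    moreover have "Suc (s - t - 1) = s - t" using ts by simp
    moreover have "Qf a b (vdiff (beta a b i (2*s)) (beta a b i (Suc (2*t)))) = a + b - a*b*(ee a b (s-t) - ee a b (s-t-1))"
      using two eo_eval_gt[OF ts, of a b] half_helper by simp
    ultimately show ?thesis by metis
  qed
qed

lemma oddneg: assumes b: "b \<ge> 1" and ba: "b \<le> a" and ab: "a*b \<ge> 5" and r: "r \<ge> 1"
  shows "a + b - a*b*(ee a b (Suc r) - ee a b r) < 0"
proof -
  have ab4: "a*b \<ge> 4" using ab by simp
  have d: "ee a b (Suc r) - ee a b r \<ge> a*b - 3"
    using ee_diff_mono[OF ab4 r] by (simp add: numeral_eq_Suc)
  have "a*b*(ee a b (Suc r) - ee a b r) \<ge> a*b*(a*b-3)" using d ab by (intro mult_left_mono) auto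
  moreover have "a*b*(a*b-3) \<ge> a*b*2" using ab by (intro mult_left_mono) auto
  moreover have "a*b \<ge> a*1" using b ba by (intro mult_left_mono) auto
  moreover have "a \<ge> 2"
  proof (rule ccontr)
    assume "\<not> a \<ge> 2" then have "a = 1" using b ba by simp
    then show False using ab b ba by simp
  qed
  moreover have "(a-1)*b \<ge> (a-1)*1" using b \<open>a \<ge> 2\<close> by (intro mult_left_mono) auto
  moreover have "(a-1)*b = a*b - b" by (simp add: algebra_simps)
  ultimately show ?thesis by (smt (verit))
qed

lemma same_type: assumes b: "b \<ge> 1" and ba: "b \<le> a" and ab: "a*b \<ge> 5" and i: "i \<in> {1,2::nat}" and jk: "j \<noteq> k"
  shows "(\<bar>int j - int k\<bar> \<ge> 2 \<longrightarrow> Qf a b (vdiff (beta a b i j) (beta a b i k)) < 0)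
       \<and> (\<bar>int j - int k\<bar> = 1 \<longrightarrow> Qf a b (vdiff (beta a b i j) (beta a b i k)) = a + b - a*b)"
proof -
  have a: "a \<ge> 1" using b ba by simp
  have ab4: "a*b \<ge> 4" using ab by simp
  define s where "s = j div 2"
  define p where "p = j mod 2"
  define t where "t = k div 2"
  define q where "q = k mod 2"
  have j: "j = 2*s + p" and k: "k = 2*t + q" unfolding s_def p_def t_def q_def by simp_all
  have p01: "p \<in> {0,1}" and q01: "q \<in> {0,1}" unfolding p_def q_def by auto
  have oddcase: "(\<bar>int j - int k\<bar> \<ge> 2 \<longrightarrow> Qf a b (vdiff (beta a b i j) (beta a b i k)) < 0)
       \<and> (\<bar>int j - int k\<bar> = 1 \<longrightarrow> Qf a b (vdiff (beta a b i j) (beta a b i k)) = a + b - a*b)"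
    if jj: "j = 2*s'" and kk: "k = Suc (2*t')" for s' t'
  proof -
    obtain r where r1: "\<bar>int (2*s') - int (Suc (2*t'))\<bar> = 2 * int r + 1"
      and r2: "Qf a b (vdiff (beta a b i (2*s')) (beta a b i (Suc (2*t')))) = a + b - a*b*(ee a b (Suc r) - ee a b r)"
      using odd_par[OF i] by blast
    show ?thesis
    proof (cases "r = 0")
      case True
      then show ?thesis using r1 r2 jj kk by simp
    next
      case False
      then show ?thesis using r1 r2 jj kk oddneg[OF b ba ab, of r] by simp
    qed
  qed
  consider "p = q" | "p = 0" "q = 1" | "p = 1" "q = 0" using p01 q01 by auto
  then show ?thesis
  proof cases
    case 1
    then have st: "s \<noteq> t" using jk j k by auto
    have "Qf a b (vdiff (beta a b i j) (beta a b i k)) \<le> 4 - a*b"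
      using same_par[OF ab4 a b i p01 st] j k 1 by simp
    moreover have "\<bar>int j - int k\<bar> \<noteq> 1" using j k 1 by presburger
    ultimately show ?thesis using ab by simp
  next
    case 2
    then show ?thesis using oddcase[of s t] j k by simp
  next
    case 3
    have "Qf a b (vdiff (beta a b i j) (beta a b i k)) = Qf a b (vdiff (beta a b i k) (beta a b i j))"
      by (rule vdiff_swap)
    moreover have "\<bar>int j - int k\<bar> = \<bar>int k - int j\<bar>" by simp
    moreover have "(\<bar>int k - int j\<bar> \<ge> 2 \<longrightarrow> Qf a b (vdiff (beta a b i k) (beta a b i j)) < 0)
       \<and> (\<bar>int k - int j\<bar> = 1 \<longrightarrow> Qf a b (vdiff (beta a b i k) (beta a b i j)) = a + b - a*b)"
    proof -
      obtain r where r1: "\<bar>int (2*t) - int (Suc (2*s))\<bar> = 2 * int r + 1"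
        and r2: "Qf a b (vdiff (beta a b i (2*t)) (beta a b i (Suc (2*s)))) = a + b - a*b*(ee a b (Suc r) - ee a b r)"
        using odd_par[OF i] by blast
      show ?thesis
      proof (cases "r = 0")
        case True
        then show ?thesis using r1 r2 j k 3 by simp
      next
        case False
        then show ?thesis using r1 r2 j k 3 oddneg[OF b ba ab, of r] by simp
      qed
    qed
    ultimately show ?thesis by simp
  qed
qed

lemma helper2: assumes "2*(q::int) = 2*c - a*b*(2*(x - y))" shows "q = c + a*b*(y - x)"
proof -
  have "a*b*(2*(x-y)) = -2*(a*b*(y-x))" by (simp add: algebra_simps)
  then show ?thesis using assms by linarith
qed

lemma hee: assumes "2*(q::int) = 2*a*1 + 2*b*1 - a*b*(2*x - 2*y)" shows "q = a + b + a*b*(y - x)"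
proof -
  have "a*b*(2*x - 2*y) = -2*(a*b*(y-x))" by (simp add: algebra_simps)
  then show ?thesis using assms by linarith
qed
lemma hoo: assumes "2*(q::int) = 2*b*1 + 2*a*1 - a*b*(2*(x - y))" shows "q = a + b + a*b*(y - x)"
proof -
  have "a*b*(2*(x - y)) = -2*(a*b*(y-x))" by (simp add: algebra_simps)
  then show ?thesis using assms by linarith
qed
lemma heo: assumes "(q::int) = c*1 + c*1 - c*(x - y)" shows "q = 2*c + c*(y - x)"
  using assms by (simp add: algebra_simps)

lemma helper3: assumes "(q::int) = c - d*(x - y)" shows "q = c + d*(y - x)"
  using assms by (simp add: algebra_simps)

lemma XX_gt: fixes a b :: int assumes b: "b \<ge> 1" and ba: "b \<le> a" and ab: "a*b \<ge> 4" and h: "b \<ge> 2 \<or> a \<ge> 5"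
  shows "(a*b-2)*(a*b-2) > a"
proof (cases "b \<ge> 2")
  case True
  have "a*b \<ge> a*2" using True ba b by (intro mult_left_mono) auto
  moreover have "(a*b-2)*(a*b-2) \<ge> (a*b-2)*2" using ab by (intro mult_left_mono) auto
  moreover have "a \<ge> 2" using True ba by simp
  moreover have "\<And>P R. a*2 \<le> P \<Longrightarrow> (P-2)*2 \<le> R \<Longrightarrow> 2 \<le> a \<Longrightarrow> a < R" by arith
  ultimately show ?thesis by blast
next
  case False
  then have "b = 1" "a \<ge> 5" using b h by auto
  then have X: "a*b - 2 = a - 2" by simp
  have "(a-2)*(a-2) \<ge> (a-2)*3" using \<open>a \<ge> 5\<close> by (intro mult_left_mono) auto
  then show ?thesis using X \<open>a \<ge> 5\<close> by simp
qed

lemma mix_main: assumes b: "b \<ge> 1" and ba: "b \<le> a" and ab: "a*b \<ge> 4" and h: "b \<ge> 2 \<or> a \<ge> 5"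
  shows "Qf a b (vdiff (beta a b 1 j) (beta a b 2 k)) > a \<or> (b = 1 \<and> j = 1 \<and> k = 0)"
proof -
  have a: "a \<ge> 1" using b ba by simp
  define s where "s = j div 2"
  define p where "p = j mod 2"
  define t where "t = k div 2"
  define q where "q = k mod 2"
  have j: "j = 2*s + p" and k: "k = 2*t + q" unfolding s_def p_def t_def q_def by simp_all
  have p01: "p \<in> {0,1}" and q01: "q \<in> {0,1}" unfolding p_def q_def by auto
  define n where "n = s + t"
  have inc: "\<And>m. ee a b (Suc m) - ee a b m \<ge> 1" using ee_inc[OF ab] by (smt (verit))
  consider "p = 0" "q = 0" | "p = 1" "q = 1" | "p = 0" "q = 1" | "p = 1" "q = 0" using p01 q01 by auto
  then show ?thesis
  proof cases
    case 1
    have Q: "Qf a b (vdiff (beta a b 1 (2*s)) (beta a b 2 (2*t))) = a + b + a*b*(ee a b (Suc n) - ee a b n)"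
      using hee[OF Qmee[of a b s t, unfolded Kf1 mix_ee]] unfolding n_def .
    have "a*b*(ee a b (Suc n) - ee a b n) \<ge> a*b*1" by (rule mult_left_mono[OF inc[of n]]) (use ab in simp)
    then show ?thesis using Q j k 1 b ab by simp
  next
    case 2
    have Q: "Qf a b (vdiff (beta a b 1 (Suc (2*s))) (beta a b 2 (Suc (2*t)))) = a + b + a*b*(ee a b (Suc (Suc n)) - ee a b (Suc n))"
      using hoo[OF Qmoo[of a b s t, unfolded Kf1 mix_oo]] unfolding n_def .
    have "a*b*(ee a b (Suc (Suc n)) - ee a b (Suc n)) \<ge> a*b*1" by (rule mult_left_mono[OF inc[of "Suc n"]]) (use ab in simp)
    then show ?thesis using Q j k 2 b ab by simp
  next
    case 3
    have Q: "Qf a b (vdiff (beta a b 1 (2*s)) (beta a b 2 (Suc (2*t)))) = 2*a + a*(ee a b (Suc (Suc n)) - ee a b n)"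
      using heo[OF Qmeo[of a b s t, unfolded Kf1 mix_eo]] unfolding n_def .
    have "a*(ee a b (Suc (Suc n)) - ee a b n) \<ge> 0" using ee_mono2[OF ab, of n] a by simp
    then show ?thesis using Q j k 3 a by simp
  next
    case 4
    have Q: "Qf a b (vdiff (beta a b 1 (Suc (2*s))) (beta a b 2 (2*t))) = 2*b + b*(ee a b (Suc (Suc n)) - ee a b n)"
      using heo[OF Qmoe[of a b s t, unfolded Kf1 mix_eo]] unfolding n_def .
    show ?thesis
    proof (cases "n = 0")
      case True
      then have st: "s = 0" "t = 0" unfolding n_def by auto
      show ?thesis
      proof (cases "b = 1")
        case True
        then show ?thesis using st j k 4 by simp
      next
        case False
        then have b2: "b \<ge> 2" using b by simp
        have "Qf a b (vdiff (beta a b 1 j) (beta a b 2 k)) = a*b*b"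
          using Q \<open>n = 0\<close> j k 4 st by (simp add: algebra_simps)
        moreover have "a*b \<ge> a*2" using b2 a by (intro mult_left_mono) auto
        moreover have "a*b*b \<ge> a*b*2" using b2 a b by (intro mult_left_mono) auto
        ultimately show ?thesis using a by linarith
      qed
    next
      case False
      then obtain m where nm: "n = Suc m" by (cases n) auto
      have d1: "ee a b (Suc (Suc n)) - ee a b (Suc n) \<ge> ee a b 3 - ee a b 2"
        using ee_diff_mono[OF ab, of 2 "Suc n"] nm by (simp add: numeral_eq_Suc)
      have d2: "ee a b (Suc n) - ee a b n \<ge> ee a b 2 - ee a b 1"
        using ee_diff_mono[OF ab, of 1 n] nm by (simp add: numeral_eq_Suc)
      have e3: "ee a b 3 = (a*b-2)*(a*b-2) - 1" by (simp add: numeral_eq_Suc)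
      have e2: "ee a b 2 = a*b-2" by (simp add: numeral_eq_Suc)
      have D: "ee a b (Suc (Suc n)) - ee a b n \<ge> (a*b-2)*(a*b-2) - 2"
        using d1 d2 e3 e2 by simp
      have "b*(ee a b (Suc (Suc n)) - ee a b n) \<ge> b*((a*b-2)*(a*b-2) - 2)"
        using D b by (intro mult_left_mono) auto
      moreover have "b*((a*b-2)*(a*b-2) - 2) = b*((a*b-2)*(a*b-2)) - 2*b" by (simp add: algebra_simps)
      moreover have "b*((a*b-2)*(a*b-2)) \<ge> 1*((a*b-2)*(a*b-2))" using b by (intro mult_right_mono) auto
      moreover have "(a*b-2)*(a*b-2) > a" using XX_gt[OF b ba ab h] .
      ultimately show ?thesis using Q j k 4 by simp
    qed
  qed
qed

lemma ee22: "ee 2 2 n = int n \<and> ee 2 2 (Suc n) = int (Suc n)"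
  by (induction n) auto

lemma beta22_1: "beta 2 2 1 j = (int j, int j + 1)"
proof -
  have "\<exists>s. j = 2*s \<or> j = Suc (2*s)" by presburger
  then obtain s where "j = 2*s \<or> j = Suc (2*s)" by blast
  then show ?thesis
  proof
    assume h: "j = 2*s"
    show ?thesis unfolding h beta_1e using ee22[of s] by simp
  next
    assume h: "j = Suc (2*s)"
    show ?thesis unfolding h beta_1o using ee22[of s] by simp
  qed
qed

lemma beta22_2: "beta 2 2 2 j = (int j + 1, int j)"
proof -
  have "\<exists>s. j = 2*s \<or> j = Suc (2*s)" by presburger
  then obtain s where "j = 2*s \<or> j = Suc (2*s)" by blast
  then show ?thesis
  proof
    assume h: "j = 2*s"
    show ?thesis unfolding h beta_2e using ee22[of s] by simp
  next
    assume h: "j = Suc (2*s)"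
    show ?thesis unfolding h beta_2o using ee22[of s] by simp
  qed
qed

lemma case22: assumes "i \<in> {1,2::nat}" "j \<noteq> k"
  shows "imag_root 2 2 (vdiff (beta 2 2 i j) (beta 2 2 i k))"
proof -
  have v: "vdiff (beta 2 2 i j) (beta 2 2 i k) = (int j - int k, int j - int k)"
  proof -
    have "i = 1 \<or> i = 2" using assms(1) by auto
    then show ?thesis
    proof
      assume h: "i = 1" show ?thesis unfolding h beta22_1 vdiff_def by simp
    next
      assume h: "i = 2" show ?thesis unfolding h beta22_2 vdiff_def by simp
    qed
  qed
  have "Qf 2 2 (int j - int k, int j - int k) = 0" unfolding Qf_def by (simp add: power2_eq_square algebra_simps)
  moreover have "(int j - int k, int j - int k) \<noteq> (0,0)" using assms(2) by simp
  ultimately show ?thesis using imag_of_Q[of 2 2] v by simp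
qed

lemma mix10: "vdiff (beta a b 1 1) (beta a b 2 0) = (0, b)"
  by (simp add: beta_def cseq_def dseq_def vdiff_def numeral_eq_Suc)

theorem proposition3p7:
  fixes a b :: int
  assumes "a \<ge> b" and "b \<ge> 1" and "b \<ge> 2 \<or> (b = 1 \<and> a \<ge> 5)"
  shows
    "(b \<ge> 2 \<longrightarrow>
        (\<forall>i\<in>{1, 2}. \<forall>j k. j \<noteq> k \<longrightarrow> imag_root a b (vdiff (beta a b i j) (beta a b i k)))
      \<and> (\<forall>j k. \<not> is_root a b (vdiff (beta a b 1 j) (beta a b 2 k))))
   \<and> (b = 1 \<and> a \<ge> 5 \<longrightarrow>
        (\<forall>i\<in>{1, 2}. \<forall>j k. \<bar>int j - int k\<bar> > 1 \<longrightarrow> imag_root a b (vdiff (beta a b i j) (beta a b i k)))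
      \<and> (\<forall>i\<in>{1, 2}. \<forall>j. real_root a b (vdiff (beta a b i j) (beta a b i (j + 1))))
      \<and> (\<forall>j k. (is_root a b (vdiff (beta a b 1 j) (beta a b 2 k))
                  \<longleftrightarrow> real_root a b (vdiff (beta a b 1 j) (beta a b 2 k)))
               \<and> (real_root a b (vdiff (beta a b 1 j) (beta a b 2 k)) \<longleftrightarrow> j = 1 \<and> k = 0)))
   \<and> (\<forall>i\<in>{1, 2}. \<forall>j k. j \<noteq> k \<longrightarrow> is_root a b (vdiff (beta a b i j) (beta a b i k)))"
proof -
  have b: "b \<ge> 1" and ba: "b \<le> a" using assms by auto
  have a: "a \<ge> 1" using b ba by simp
  have h: "b \<ge> 2 \<or> a \<ge> 5" using assms(3) by auto
  have ab4: "a*b \<ge> 4"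
  proof (cases "b \<ge> 2")
    case True
    then have "a*b \<ge> 2*2" using ba by (intro mult_mono) auto
    then show ?thesis by simp
  next
    case False
    then have "b = 1" "a \<ge> 5" using assms by auto
    then show ?thesis by simp
  qed
  have mixQ: "Qf a b (vdiff (beta a b 1 j) (beta a b 2 k)) > a \<or> (b = 1 \<and> j = 1 \<and> k = 0)" for j k
    using mix_main[OF b ba ab4 h] .
  have mix_notroot: "\<not> is_root a b (vdiff (beta a b 1 j) (beta a b 2 k))"
    if "Qf a b (vdiff (beta a b 1 j) (beta a b 2 k)) > a" for j k
    using root_Q[of a b] that a b ba by fastforce
  have same: "imag_root a b (vdiff (beta a b i j) (beta a b i k)) \<or>
      (\<bar>int j - int k\<bar> = 1 \<and> b = 1 \<and> real_root a b (vdiff (beta a b i j) (beta a b i k)))"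
    if i: "i \<in> {1,2::nat}" and jk: "j \<noteq> k" for i j k
  proof (cases "a = 2 \<and> b = 2")
    case True
    then show ?thesis using case22[OF i jk] by simp
  next
    case False
    have ab5: "a*b \<ge> 5"
    proof (cases "b \<ge> 2")
      case True
      then have "a \<ge> 3" using False ba by auto
      then have "a*b \<ge> 3*2" using True by (intro mult_mono) auto
      then show ?thesis by simp
    next
      case False
      then have "b = 1" "a \<ge> 5" using assms by auto
      then show ?thesis by simp
    qed
    note ST = same_type[OF b ba ab5 i jk]
    have "\<bar>int j - int k\<bar> \<ge> 2 \<or> \<bar>int j - int k\<bar> = 1" using jk by linarith
    then show ?thesis
    proof
      assume "\<bar>int j - int k\<bar> \<ge> 2"
      then have Q: "Qf a b (vdiff (beta a b i j) (beta a b i k)) < 0" using ST by blast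
      then have "vdiff (beta a b i j) (beta a b i k) \<noteq> (0,0)" unfolding Qf_def by auto
      then show ?thesis using imag_of_Q[OF a b] Q by simp
    next
      assume d1: "\<bar>int j - int k\<bar> = 1"
      then have Q: "Qf a b (vdiff (beta a b i j) (beta a b i k)) = a + b - a*b" using ST by blast
      show ?thesis
      proof (cases "b = 1")
        case True
        then have "Qf a b (vdiff (beta a b i j) (beta a b i k)) = b" using Q by simp
        then show ?thesis using real_of_Q[OF b ba] d1 True by blast
      next
        case False
        then have b2: "b \<ge> 2" using b by simp
        then have a3: "a \<ge> 3" using ba \<open>\<not> (a = 2 \<and> b = 2)\<close> by auto
        have "(a-1)*(b-1) \<ge> 2*1" using a3 b2 by (intro mult_mono) auto
        moreover have "(a-1)*(b-1) = a*b - a - b + 1" by (simp add: algebra_simps)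
        ultimately have "Qf a b (vdiff (beta a b i j) (beta a b i k)) < 0" using Q by linarith
        moreover from this have "vdiff (beta a b i j) (beta a b i k) \<noteq> (0,0)" unfolding Qf_def by auto
        ultimately show ?thesis using imag_of_Q[OF a b] by simp
      qed
    qed
  qed
  have part1: "b \<ge> 2 \<longrightarrow>
        (\<forall>i\<in>{1, 2}. \<forall>j k. j \<noteq> k \<longrightarrow> imag_root a b (vdiff (beta a b i j) (beta a b i k)))
      \<and> (\<forall>j k. \<not> is_root a b (vdiff (beta a b 1 j) (beta a b 2 k)))"
  proof
    assume b2: "b \<ge> 2"
    show "(\<forall>i\<in>{1, 2}. \<forall>j k. j \<noteq> k \<longrightarrow> imag_root a b (vdiff (beta a b i j) (beta a b i k)))
      \<and> (\<forall>j k. \<not> is_root a b (vdiff (beta a b 1 j) (beta a b 2 k)))"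
    proof
      show "\<forall>i\<in>{1, 2}. \<forall>j k. j \<noteq> k \<longrightarrow> imag_root a b (vdiff (beta a b i j) (beta a b i k))"
      proof (intro ballI allI impI)
        fix i j k assume "i \<in> {1,2::nat}" "(j::nat) \<noteq> k"
        then show "imag_root a b (vdiff (beta a b i j) (beta a b i k))" using same[of i j k] b2 by auto
      qed
      show "\<forall>j k. \<not> is_root a b (vdiff (beta a b 1 j) (beta a b 2 k))"
      proof (intro allI)
        fix j k
        have "Qf a b (vdiff (beta a b 1 j) (beta a b 2 k)) > a" using mixQ[of j k] b2 by auto
        then show "\<not> is_root a b (vdiff (beta a b 1 j) (beta a b 2 k))" by (rule mix_notroot)
      qed
    qed
  qed
  have part2: "b = 1 \<and> a \<ge> 5 \<longrightarrow>
        (\<forall>i\<in>{1, 2}. \<forall>j k. \<bar>int j - int k\<bar> > 1 \<longrightarrow> imag_root a b (vdiff (beta a b i j) (beta a b i k)))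
      \<and> (\<forall>i\<in>{1, 2}. \<forall>j. real_root a b (vdiff (beta a b i j) (beta a b i (j + 1))))
      \<and> (\<forall>j k. (is_root a b (vdiff (beta a b 1 j) (beta a b 2 k))
                  \<longleftrightarrow> real_root a b (vdiff (beta a b 1 j) (beta a b 2 k)))
               \<and> (real_root a b (vdiff (beta a b 1 j) (beta a b 2 k)) \<longleftrightarrow> j = 1 \<and> k = 0))"
  proof
    assume b1: "b = 1 \<and> a \<ge> 5"
    have ab5: "a*b \<ge> 5" using b1 by simp
    have p1: "\<forall>i\<in>{1, 2}. \<forall>j k. \<bar>int j - int k\<bar> > 1 \<longrightarrow> imag_root a b (vdiff (beta a b i j) (beta a b i k))"
    proof (intro ballI allI impI)
      fix i j k assume i: "i \<in> {1,2::nat}" and d: "\<bar>int j - int k\<bar> > 1"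
      then have jk: "j \<noteq> k" by auto
      have Q: "Qf a b (vdiff (beta a b i j) (beta a b i k)) < 0" using same_type[OF b ba ab5 i jk] d by simp
      then have "vdiff (beta a b i j) (beta a b i k) \<noteq> (0,0)" unfolding Qf_def by auto
      then show "imag_root a b (vdiff (beta a b i j) (beta a b i k))" using imag_of_Q[OF a b] Q by simp
    qed
    have p2: "\<forall>i\<in>{1, 2}. \<forall>j. real_root a b (vdiff (beta a b i j) (beta a b i (j + 1)))"
    proof (intro ballI allI)
      fix i j assume i: "i \<in> {1,2::nat}"
      have jk: "j \<noteq> j + (1::nat)" by simp
      have "Qf a b (vdiff (beta a b i j) (beta a b i (j+1))) = a + b - a*b" using same_type[OF b ba ab5 i jk] by simp
      then have "Qf a b (vdiff (beta a b i j) (beta a b i (j+1))) = b" using b1 by simp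
      then show "real_root a b (vdiff (beta a b i j) (beta a b i (j + 1)))" using real_of_Q[OF b ba] by blast
    qed
    have p3: "\<forall>j k. (is_root a b (vdiff (beta a b 1 j) (beta a b 2 k))
                  \<longleftrightarrow> real_root a b (vdiff (beta a b 1 j) (beta a b 2 k)))
               \<and> (real_root a b (vdiff (beta a b 1 j) (beta a b 2 k)) \<longleftrightarrow> j = 1 \<and> k = 0)"
    proof (intro allI)
      fix j k
      have pos: "Qf a b (vdiff (beta a b 1 j) (beta a b 2 k)) > 0"
      proof (cases "j = 1 \<and> k = 0")
        case True
        then show ?thesis using mix10[of a b] a b1 unfolding Qf_def by simp
      next
        case False
        then have "Qf a b (vdiff (beta a b 1 j) (beta a b 2 k)) > a" using mixQ[of j k] by blast
        then show ?thesis using a by linarith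
      qed
      have ip: "inv_form a b (vdiff (beta a b 1 j) (beta a b 2 k)) > 0"
        using inv_pos_iff[of b a "vdiff (beta a b 1 j) (beta a b 2 k)"] b pos by simp
      have ri: "is_root a b (vdiff (beta a b 1 j) (beta a b 2 k)) \<longleftrightarrow> real_root a b (vdiff (beta a b 1 j) (beta a b 2 k))"
        unfolding real_root_def using ip by blast
      have rr: "real_root a b (vdiff (beta a b 1 j) (beta a b 2 k)) \<longleftrightarrow> j = 1 \<and> k = 0"
      proof
        assume "real_root a b (vdiff (beta a b 1 j) (beta a b 2 k))"
        then have "is_root a b (vdiff (beta a b 1 j) (beta a b 2 k))" unfolding real_root_def by simp
        show "j = 1 \<and> k = 0"
        proof (rule ccontr)
          assume "\<not> (j = 1 \<and> k = 0)"
          then have "Qf a b (vdiff (beta a b 1 j) (beta a b 2 k)) > a" using mixQ[of j k] by blast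
          then have "\<not> is_root a b (vdiff (beta a b 1 j) (beta a b 2 k))" by (rule mix_notroot)
          then show False using \<open>is_root a b (vdiff (beta a b 1 j) (beta a b 2 k))\<close> by blast
        qed
      next
        assume "j = 1 \<and> k = 0"
        then have v: "vdiff (beta a b 1 j) (beta a b 2 k) = (0,1)" using mix10[of a b] b1 by simp
        have "(0::int,1::int) \<in> weyl_orbit a b {(1,0),(0,1)}" by (simp add: weyl_orbit.base)
        then have "is_root a b (0,1)" unfolding is_root_def root_system_def by simp
        moreover have "Qf a b (0,1) > 0" using a unfolding Qf_def by simp
        ultimately show "real_root a b (vdiff (beta a b 1 j) (beta a b 2 k))"
          unfolding real_root_def v using inv_pos_iff[of b a] b by simp
      qed
      show "(is_root a b (vdiff (beta a b 1 j) (beta a b 2 k))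
                  \<longleftrightarrow> real_root a b (vdiff (beta a b 1 j) (beta a b 2 k)))
               \<and> (real_root a b (vdiff (beta a b 1 j) (beta a b 2 k)) \<longleftrightarrow> j = 1 \<and> k = 0)"
        using ri rr by (intro conjI)
    qed
    show "(\<forall>i\<in>{1, 2}. \<forall>j k. \<bar>int j - int k\<bar> > 1 \<longrightarrow> imag_root a b (vdiff (beta a b i j) (beta a b i k)))
      \<and> (\<forall>i\<in>{1, 2}. \<forall>j. real_root a b (vdiff (beta a b i j) (beta a b i (j + 1))))
      \<and> (\<forall>j k. (is_root a b (vdiff (beta a b 1 j) (beta a b 2 k))
                  \<longleftrightarrow> real_root a b (vdiff (beta a b 1 j) (beta a b 2 k)))
               \<and> (real_root a b (vdiff (beta a b 1 j) (beta a b 2 k)) \<longleftrightarrow> j = 1 \<and> k = 0))"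
      using p1 p2 p3 by (intro conjI)
  qed
  have part3: "\<forall>i\<in>{1, 2}. \<forall>j k. j \<noteq> k \<longrightarrow> is_root a b (vdiff (beta a b i j) (beta a b i k))"
  proof (intro ballI allI impI)
    fix i j k assume "i \<in> {1,2::nat}" "(j::nat) \<noteq> k"
    then have "imag_root a b (vdiff (beta a b i j) (beta a b i k)) \<or>
      (\<bar>int j - int k\<bar> = 1 \<and> b = 1 \<and> real_root a b (vdiff (beta a b i j) (beta a b i k)))" by (rule same)
    then show "is_root a b (vdiff (beta a b i j) (beta a b i k))" unfolding imag_root_def real_root_def by blast
  qed
  from part1 part2 part3 show ?thesis by (intro conjI)
qed

end
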